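(* Let $f:\mathbb N\to\{0,1\}$ and let $\theta$ be a closed term with $\theta\Vdash\exists n^{\mathbb N}(f(n)=1)$. Then $\theta\star p\cdot\pi_0\succ p\star\underline n\cdot\varpi$ for some integer $n$ with $f(n)=1$ and some stack $\varpi$.
   Context: Fix an integer $N\ge 0$. The set $\Lambda$ of terms is the smallest set containing the constants $B,C,I,K,W,cc,A$ and $p,q_0,\dots,q_N$, closed under application $(\xi)\eta$ (written $\xi\eta$), and containing, for each sequence $(\xi_i)_{i\in\mathbb N}$ of closed terms (no occurrence of $p,q_0,\dots,q_N$), a constant $\bigwedge_i\xi_i$ (injectively, well-founded). Stacks: finite sequences $t_0\cdot\ldots\cdot t_{n-1}\cdot\pi_0$ of terms, $\pi_0$ the empty stack; $\Pi$ the set of stacks. $\ell_t=((C)(B)CB)t$, $k_{\pi_0}=A$, $k_{t\cdot\pi}=(\ell_t)k_\pi$; $\sigma=(BW)(C)(B)BB$, $\underline0=(K)I$, $\underline{n+1}=(\sigma)\underline n$. Execution $\succ$: least preorder on $\Lambda\times\Pi$ with $(\xi)\eta\star\pi\succ\xi\star\eta\cdot\pi$; $B\star\xi\cdot\eta\cdot\zeta\cdot\pi\succ\xi\star(\eta)\zeta\cdot\pi$; $C\star\xi\cdot\eta\cdot\zeta\cdot\pi\succ\xi\star\zeta\cdot\eta\cdot\pi$; $I\star\xi\cdot\pi\succ\xi\star\pi$; $K\star\xi\cdot\eta\cdot\pi\succ\xi\star\pi$; $W\star\xi\cdot\eta\cdot\pi\succ\xi\star\eta\cdot\eta\cdot\pi$;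 $cc\star\xi\cdot\pi\succ\xi\star k_\pi\cdot\pi$; $A\star\xi\cdot\pi\succ\xi\star\pi_0$; $\bigwedge_i\xi_i\star\underline n\cdot\pi\succ\xi_n\star\pi$. Pole $\perp\!\!\!\perp=\{\xi\star\pi:\exists\varpi,\ \xi\star\pi\succ p\star\varpi\}$. Realizability (Krivine): $\xi\Vdash F$ iff $\xi\star\pi\in\perp\!\!\!\perp$ for all $\pi\in\|F\|$, where $\|\bot\|=\Pi$, $\|\top\|=\emptyset$, $\|A\to B\|=\{\eta\cdot\pi:\eta\Vdash A,\pi\in\|B\|\}$, $\|\forall n^{\mathbb N}F[n]\|=\{\underline n\cdot\pi:n\in\mathbb N,\pi\in\|F[n]\|\}$; $\neg A$ is $A\to\bot$ and $\exists n^{\mathbb N}F[n]$ is $\neg\forall n^{\mathbb N}\neg F[n]$. For a function $f$ of the ground model, the formula $f(n)\neq1$ has falsity value $\|\bot\|=\Pi$ if $f(n)=1$ and $\|\top\|=\emptyset$ if $f(n)\neq1$. *)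

theory Defs
  imports Main
begin

text \<open>Terms of Lambda. The constant Inf s stands for the infinitary constant
  bigwedge_i s(i); Q j stands for q_j; only q_0..q_N are allowed (see wf).\<close>
datatype trm = cB | cC | cI | cK | cW | cCC | cA | cP | cQ nat
  | App trm trm | Inf "nat \<Rightarrow> trm"

primrec closed :: "trm \<Rightarrow> bool" where
  "closed cB = True" | "closed cC = True" | "closed cI = True" | "closed cK = True"
| "closed cW = True" | "closed cCC = True" | "closed cA = True"
| "closed cP = False" | "closed (cQ j) = False"
| "closed (App x y) = (closed x \<and> closed y)"
| "closed (Inf s) = True"

primrec wf :: "nat \<Rightarrow> trm \<Rightarrow> bool" where
  "wf N cB = True" | "wf N cC = True" | "wf N cI = True" | "wf N cK = True"
| "wf N cW = True" | "wf N cCC = True" | "wf N cA = True"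
| "wf N cP = True" | "wf N (cQ j) = (j \<le> N)"
| "wf N (App x y) = (wf N x \<and> wf N y)"
| "wf N (Inf s) = (\<forall>i. closed (s i) \<and> wf N (s i))"

type_synonym stack = "trm list"

definition Stacks :: "nat \<Rightarrow> stack set" where
  "Stacks N = {\<pi>. \<forall>t\<in>set \<pi>. wf N t}"

definition ell :: "trm \<Rightarrow> trm" where
  "ell t = App (App cC (App (App cB cC) cB)) t"

primrec kk :: "stack \<Rightarrow> trm" where
  "kk [] = cA"
| "kk (t # \<pi>) = App (ell t) (kk \<pi>)"

definition sigma :: trm where
  "sigma = App (App cB cW) (App cC (App (App cB cB) cB))"

primrec num :: "nat \<Rightarrow> trm" where
  "num 0 = App cK cI"
| "num (Suc n) = App sigma (num n)"

inductive step :: "trm \<times> stack \<Rightarrow> trm \<times> stack \<Rightarrow> bool" where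
  "step (App x y, \<pi>) (x, y # \<pi>)"
| "step (cB, x # y # z # \<pi>) (x, App y z # \<pi>)"
| "step (cC, x # y # z # \<pi>) (x, z # y # \<pi>)"
| "step (cI, x # \<pi>) (x, \<pi>)"
| "step (cK, x # y # \<pi>) (x, \<pi>)"
| "step (cW, x # y # \<pi>) (x, y # y # \<pi>)"
| "step (cCC, x # \<pi>) (x, kk \<pi> # \<pi>)"
| "step (cA, x # \<pi>) (x, [])"
| "step (Inf s, num n # \<pi>) (s n, \<pi>)"

definition exec :: "trm \<times> stack \<Rightarrow> trm \<times> stack \<Rightarrow> bool" where
  "exec = step\<^sup>*\<^sup>*"

definition pole :: "trm \<times> stack \<Rightarrow> bool" where
  "pole c = (\<exists>w. exec c (cP, w))"

definition realizes :: "nat \<Rightarrow> trm \<Rightarrow> stack set \<Rightarrow> bool" where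
  "realizes N \<xi> F = (\<forall>\<pi>\<in>F. pole (\<xi>, \<pi>))"

definition fv_bot :: "nat \<Rightarrow> stack set" where
  "fv_bot N = Stacks N"

definition fv_top :: "stack set" where
  "fv_top = {}"

definition fv_imp :: "nat \<Rightarrow> stack set \<Rightarrow> stack set \<Rightarrow> stack set" where
  "fv_imp N FA FB = {\<eta> # \<pi> | \<eta> \<pi>. wf N \<eta> \<and> realizes N \<eta> FA \<and> \<pi> \<in> FB}"

definition fv_all :: "(nat \<Rightarrow> stack set) \<Rightarrow> stack set" where
  "fv_all F = {num n # \<pi> | n \<pi>. \<pi> \<in> F n}"

definition fv_neq1 :: "nat \<Rightarrow> (nat \<Rightarrow> nat) \<Rightarrow> nat \<Rightarrow> stack set" where
  "fv_neq1 N f n = (if f n = 1 then fv_bot N else fv_top)"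

text \<open>exists n. f(n)=1  is  not (forall n. f(n) \<noteq> 1)\<close>
definition fv_ex_eq1 :: "nat \<Rightarrow> (nat \<Rightarrow> nat) \<Rightarrow> stack set" where
  "fv_ex_eq1 N f = fv_imp N (fv_all (fv_neq1 N f)) (fv_bot N)"

end

theory Submission
  imports Defs
begin

lemma num_inj: "num n = num m \<Longrightarrow> n = m"
proof (induction n arbitrary: m)
  case 0 then show ?case by (cases m) (auto simp: sigma_def)
next
  case (Suc n) then show ?case by (cases m) (auto simp: sigma_def)
qed

lemma num_ne_P[simp]: "cP \<noteq> num n"
  by (cases n) auto

lemma step_det: "step c d \<Longrightarrow> step c e \<Longrightarrow> d = e"
  by (induction rule: step.induct) (auto elim: step.cases dest: num_inj)

definition sel :: "(nat \<Rightarrow> nat) \<Rightarrow> nat \<Rightarrow> trm" where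
  "sel f = (\<lambda>n. if f n = 1 then cI else Inf (\<lambda>_. cI))"

definition xi :: "(nat \<Rightarrow> nat) \<Rightarrow> trm" where
  "xi f = App (App cC (Inf (sel f))) cP"

primrec sb :: "(nat \<Rightarrow> nat) \<Rightarrow> trm \<Rightarrow> trm" where
  "sb f cB = cB" | "sb f cC = cC" | "sb f cI = cI" | "sb f cK = cK"
| "sb f cW = cW" | "sb f cCC = cCC" | "sb f cA = cA"
| "sb f cP = xi f" | "sb f (cQ j) = cQ j"
| "sb f (App x y) = App (sb f x) (sb f y)"
| "sb f (Inf s) = Inf s"

lemma sb_closed: "closed t \<Longrightarrow> sb f t = t"
  by (induction t) auto

lemma sb_num[simp]: "sb f (num n) = num n"
  by (induction n) (auto simp: sigma_def)

lemma sb_kk[simp]: "sb f (kk \<pi>) = kk (map (sb f) \<pi>)"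
  by (induction \<pi>) (auto simp: ell_def)

lemma sb_atom[simp]:
  "sb f x = cB \<longleftrightarrow> x = cB" "sb f x = cC \<longleftrightarrow> x = cC" "sb f x = cI \<longleftrightarrow> x = cI"
  "sb f x = cK \<longleftrightarrow> x = cK" "sb f x = cW \<longleftrightarrow> x = cW" "sb f x = cCC \<longleftrightarrow> x = cCC"
  "sb f x = cA \<longleftrightarrow> x = cA" "sb f x = cP \<longleftrightarrow> False" "sb f x = cQ j \<longleftrightarrow> x = cQ j"
  by (cases x; simp add: xi_def)+

lemma sb_App: "sb f x = App a b \<longleftrightarrow> (x = cP \<and> xi f = App a b) \<or> (\<exists>x1 x2. x = App x1 x2 \<and> sb f x1 = a \<and> sb f x2 = b)"
  by (cases x) auto

lemma sb_eq_num: "sb f x = num n \<Longrightarrow> x = num n"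
proof (induction n arbitrary: x)
  case 0 then show ?case by (auto simp: sb_App xi_def)
next
  case (Suc n) then show ?case by (auto simp: sb_App xi_def sigma_def)
qed

definition wfc :: "nat \<Rightarrow> trm \<times> stack \<Rightarrow> bool" where
  "wfc N c = (wf N (fst c) \<and> (\<forall>t\<in>set (snd c). wf N t))"

lemma wf_kk: "\<forall>t\<in>set \<pi>. wf N t \<Longrightarrow> wf N (kk \<pi>)"
  by (induction \<pi>) (auto simp: ell_def)

lemma wf_num: "wf N (num n)"
  by (induction n) (auto simp: sigma_def)

lemma step_wfc: "step c d \<Longrightarrow> wfc N c \<Longrightarrow> wfc N d"
  by (induction rule: step.induct) (auto simp: wfc_def wf_kk)

lemma exec_wfc: "step\<^sup>*\<^sup>* c d \<Longrightarrow> wfc N c \<Longrightarrow> wfc N d"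
  by (induction rule: rtranclp_induct) (auto dest: step_wfc)

definition sbc :: "(nat \<Rightarrow> nat) \<Rightarrow> trm \<times> stack \<Rightarrow> trm \<times> stack" where
  "sbc f c = (sb f (fst c), map (sb f) (snd c))"

lemma fwd: "step c d \<Longrightarrow> wfc N c \<Longrightarrow> step (sbc f c) (sbc f d)"
proof (induction rule: step.induct)
  case (9 s n \<pi>)
  then have "closed (s n)" by (simp add: wfc_def)
  then show ?case by (simp add: sbc_def sb_closed step.intros)
qed (auto simp: sbc_def intro: step.intros)

lemma bwd: "step (sbc f c) e \<Longrightarrow> fst c \<noteq> cP \<Longrightarrow> \<exists>d. step c d"
proof -
  assume st: "step (sbc f c) e" and h: "fst c \<noteq> cP"
  obtain t \<pi> where c: "c = (t, \<pi>)" by (cases c)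
  show ?thesis
    using st h unfolding c sbc_def
    apply (cases t)
    apply (auto elim!: step.cases intro: step.intros dest!: sb_eq_num)
    done
qed

lemma back_trace:
  assumes "step\<^sup>*\<^sup>* e b" "fst b = cP"
  shows "\<And>c. e = sbc f c \<Longrightarrow> wfc N c \<Longrightarrow>
    \<exists>d. step\<^sup>*\<^sup>* c d \<and> fst d = cP \<and> wfc N d \<and> step\<^sup>*\<^sup>* (sbc f d) b"
  using assms(1)
proof (induction rule: converse_rtranclp_induct)
  case base
  then show ?case using assms(2) by (auto simp: sbc_def)
next
  case (step e e')
  show ?case
  proof (cases "fst c = cP")
    case True
    then show ?thesis using step by (intro exI[of _ c]) auto
  next
    case False
    with step bwd obtain d0 where d0: "step c d0" by blast
    have "step (sbc f c) (sbc f d0)" using fwd d0 step by blast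
    then have "e' = sbc f d0" using step step_det by blast
    moreover have "wfc N d0" using step_wfc d0 step by blast
    ultimately obtain d where "step\<^sup>*\<^sup>* d0 d \<and> fst d = cP \<and> wfc N d \<and> step\<^sup>*\<^sup>* (sbc f d) b"
      using step.IH by blast
    then show ?thesis using d0 by (meson converse_rtranclp_into_rtranclp)
  qed
qed

lemma rt_next: "step\<^sup>*\<^sup>* a b \<Longrightarrow> step a a' \<Longrightarrow> a = b \<or> step\<^sup>*\<^sup>* a' b"
  by (metis converse_rtranclpE step_det)

lemma rt_nx: "step\<^sup>*\<^sup>* a (cP, w) \<Longrightarrow> step a a' \<Longrightarrow> fst a \<noteq> cP \<Longrightarrow> step\<^sup>*\<^sup>* a' (cP, w)"
  using rt_next by fastforce

lemma rt_stuck: "step\<^sup>*\<^sup>* a b \<Longrightarrow> \<not> (\<exists>x. step a x) \<Longrightarrow> a = b"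
  by (metis converse_rtranclpE)

lemma xi_run:
  assumes "step\<^sup>*\<^sup>* (xi f, map (sb f) w) (cP, w')"
  shows "\<exists>n v. w = num n # v \<and> f n = 1"
proof -
  have 1: "step (xi f, map (sb f) w) (App cC (Inf (sel f)), cP # map (sb f) w)"
    by (simp add: xi_def step.intros)
  have 2: "step (App cC (Inf (sel f)), cP # map (sb f) w) (cC, Inf (sel f) # cP # map (sb f) w)"
    by (simp add: step.intros)
  have r: "step\<^sup>*\<^sup>* (cC, Inf (sel f) # cP # map (sb f) w) (cP, w')"
    using rt_nx[OF rt_nx[OF assms 1] 2] by (auto simp: xi_def)
  obtain u w1 where w: "w = u # w1"
  proof (cases w)
    case Nil
    then have "\<not> (\<exists>x. step (cC, Inf (sel f) # cP # map (sb f) w) x)" by (auto elim: step.cases)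
    then show ?thesis using rt_stuck[OF r] by auto
  qed
  have 3: "step (cC, Inf (sel f) # cP # map (sb f) w) (Inf (sel f), sb f u # cP # map (sb f) w1)"
    by (simp add: w step.intros)
  have r2: "step\<^sup>*\<^sup>* (Inf (sel f), sb f u # cP # map (sb f) w1) (cP, w')"
    using rt_nx[OF r 3] by auto
  obtain n where n: "sb f u = num n"
  proof (rule ccontr)
    assume "\<not> thesis"
    with that have "\<not> (\<exists>x. step (Inf (sel f), sb f u # cP # map (sb f) w1) x)"
      by (auto elim: step.cases)
    then show False using rt_stuck[OF r2] by auto
  qed
  have u: "u = num n" using n sb_eq_num by blast
  have 4: "step (Inf (sel f), sb f u # cP # map (sb f) w1) (sel f n, cP # map (sb f) w1)"
    by (simp add: n step.intros)
  have r3: "step\<^sup>*\<^sup>* (sel f n, cP # map (sb f) w1) (cP, w')"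
    using rt_nx[OF r2 4] by (auto simp: sel_def)
  have "f n = 1"
  proof (rule ccontr)
    assume "f n \<noteq> 1"
    then have "sel f n = Inf (\<lambda>_. cI)" by (simp add: sel_def)
    moreover have "\<not> (\<exists>x. step (Inf (\<lambda>_. cI), cP # map (sb f) w1) x)"
      by (auto elim: step.cases)
    ultimately show False using rt_stuck[OF r3] by auto
  qed
  then show ?thesis using w u by blast
qed

theorem proposition1:
  fixes N :: nat and f :: "nat \<Rightarrow> nat" and \<theta> :: trm
  assumes "\<forall>n. f n \<in> {0, 1}"
    and "wf N \<theta>" and "closed \<theta>"
    and "realizes N \<theta> (fv_ex_eq1 N f)"
  shows "\<exists>n w. f n = 1 \<and> w \<in> Stacks N \<and> exec (\<theta>, [cP]) (cP, num n # w)"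
proof -
  have wxi: "wf N (xi f)" by (simp add: xi_def sel_def)
  have rxi: "realizes N (xi f) (fv_all (fv_neq1 N f))"
    unfolding realizes_def fv_all_def
  proof (safe)
    fix n \<pi> assume "\<pi> \<in> fv_neq1 N f n"
    then have fn: "f n = 1" by (auto simp: fv_neq1_def fv_top_def split: if_splits)
    have "step\<^sup>*\<^sup>* (xi f, num n # \<pi>) (cP, \<pi>)"
    proof -
      have "step (xi f, num n # \<pi>) (App cC (Inf (sel f)), cP # num n # \<pi>)"
        by (simp add: xi_def step.intros)
      moreover have "step (App cC (Inf (sel f)), cP # num n # \<pi>) (cC, Inf (sel f) # cP # num n # \<pi>)"
        by (simp add: step.intros)
      moreover have "step (cC, Inf (sel f) # cP # num n # \<pi>) (Inf (sel f), num n # cP # \<pi>)"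
        by (simp add: step.intros)
      moreover have "step (Inf (sel f), num n # cP # \<pi>) (cI, cP # \<pi>)"
        using step.intros(9)[of "sel f" n "cP # \<pi>"] fn by (simp add: sel_def)
      moreover have "step (cI, cP # \<pi>) (cP, \<pi>)" by (simp add: step.intros)
      ultimately show ?thesis by (meson converse_rtranclp_into_rtranclp rtranclp.rtrancl_refl)
    qed
    then show "pole (xi f, num n # \<pi>)" by (auto simp: pole_def exec_def)
  qed
  have "[xi f] \<in> fv_ex_eq1 N f"
    using wxi rxi by (auto simp: fv_ex_eq1_def fv_imp_def fv_bot_def Stacks_def)
  then have "pole (\<theta>, [xi f])" using assms(4) by (simp add: realizes_def)
  then obtain w' where e: "step\<^sup>*\<^sup>* (\<theta>, [xi f]) (cP, w')" by (auto simp: pole_def exec_def)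
  have sc: "(\<theta>, [xi f]) = sbc f (\<theta>, [cP])" by (simp add: sbc_def sb_closed assms(3))
  have wc: "wfc N (\<theta>, [cP])" using assms(2) by (simp add: wfc_def)
  obtain d where d: "step\<^sup>*\<^sup>* (\<theta>, [cP]) d" "fst d = cP" "wfc N d" "step\<^sup>*\<^sup>* (sbc f d) (cP, w')"
    using back_trace[OF e _ sc wc] by auto
  obtain w where dw: "d = (cP, w)" using d(2) by (cases d) auto
  have "step\<^sup>*\<^sup>* (xi f, map (sb f) w) (cP, w')" using d(4) by (simp add: dw sbc_def)
  then obtain n v where "w = num n # v" "f n = 1" using xi_run by blast
  moreover have "v \<in> Stacks N" using d(3) by (simp add: dw wfc_def Stacks_def \<open>w = num n # v\<close>)
  ultimately show ?thesis using d(1) dw by (auto simp: exec_def)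
qed

end
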